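(* Let $K\ge 2$, let $m_1<\cdots<m_K$ be pairwise co-prime positive integers, $M$ a positive integer and $M_k=Mm_k$. Let $N_1,N_2$ be nonnegative integers, $r_{l,k}=\langle N_l\rangle_{M_k}$, $r_l^c=\langle N_l\rangle_M$, and let $\tilde r_{l,k}=r_{l,k}+\Delta r_{l,k}$ ($l=1,2$, $k=1,\ldots,K$) with integer errors $\Delta r_{l,k}$. Let $\tau=\max_{l,k}|\Delta r_{l,k}|$ and $\tilde r^c_{l,k}=\langle\tilde r_{l,k}\rangle_M$. List the $2K$ numbers $\tilde r^c_{l,k}$ ($l=1,2$, $k=1,\ldots,K$, counted with multiplicity) in nondecreasing order as $s_1\le s_2\le\cdots\le s_{2K}$, and define $D_k=s_{k+1}-s_k$ for $k=1,\ldots,2K-1$ and $D_{2K}=s_1-s_{2K}+M$. If $\tau<M/8$, then there exists one and only one index $k_0\in\{1,\ldots,K\}$ with $$D_{k_0}+D_{k_0+K}>M/2.$$ Moreover, define the multisets $\Omega_1=\{s_{k_0+1},\ldots,s_{k_0+K}\}$ and $$\Omega_2=\begin{cases}\{s_1,\ldots,s_K\}, & k_0=K,\\ \{s_{k_0+K+1}-M,\ldots,s_{2K}-M,\ s_1,\ldots,s_{k_0}\}, & k_0\ne K.\end{cases}$$ Then $\max\Omega_1-\min\Omega_1\le 2\tau$ and $\max\Omega_2-\min\Omega_2\le 2\tau$.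
   Context: For a positive integer $n$ and an integer $x$ (possibly negative), $\langle x\rangle_n$ denotes the remainder of $x$ modulo $n$, i.e. the unique element of $\{0,\ldots,n-1\}$ congruent to $x$ modulo $n$. Note $\sum_{k=1}^{2K}D_k=M$ and all $D_k\ge 0$. *)

theory Defs
  imports Main "HOL-Computational_Algebra.Primes"
begin

definition rc :: "nat \<Rightarrow> (nat \<Rightarrow> nat) \<Rightarrow> (nat \<Rightarrow> nat) \<Rightarrow> (nat \<Rightarrow> nat \<Rightarrow> int) \<Rightarrow> nat \<Rightarrow> nat \<Rightarrow> int" where
  "rc M m N dr l k = (int (N l mod (M * m k)) + dr l k) mod int M"

text \<open>The sorted sequence s_1 <= ... <= s_{2K} (1-based indexing).\<close>
definition sseq :: "nat \<Rightarrow> nat \<Rightarrow> (nat \<Rightarrow> nat) \<Rightarrow> (nat \<Rightarrow> nat) \<Rightarrow> (nat \<Rightarrow> nat \<Rightarrow> int) \<Rightarrow> nat \<Rightarrow> int" where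
  "sseq K M m N dr i = sort [rc M m N dr l k. l \<leftarrow> [1,2], k \<leftarrow> [1..<K+1]] ! (i - 1)"

definition Dgap :: "nat \<Rightarrow> nat \<Rightarrow> (nat \<Rightarrow> int) \<Rightarrow> nat \<Rightarrow> int" where
  "Dgap K M s k = (if k = 2*K then s 1 - s (2*K) + int M else s (k+1) - s k)"

end

theory Submission
  imports Defs "HOL-Library.Multiset"
begin


lemma final:
  fixes s :: "nat \<Rightarrow> int" and K M :: nat and tau :: int
  assumes K1: "K \<ge> 1"
    and mono: "\<And>i j. 1 \<le> i \<Longrightarrow> i \<le> j \<Longrightarrow> j \<le> 2*K \<Longrightarrow> s i \<le> s j"
    and rng: "\<And>i. 1 \<le> i \<Longrightarrow> i \<le> 2*K \<Longrightarrow> 0 \<le> s i \<and> s i < int M"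
    and tau: "8*tau < int M"
    and ex: "\<exists>k\<in>{1..K}. s(k+K) - s(k+1) \<le> 2*tau \<and>
               (if k = K then s K - s 1 else s k + int M - s(k+K+1)) \<le> 2*tau"
  shows "(\<exists>!k0. k0 \<in> {1..K} \<and> 2 * (Dgap K M s k0 + Dgap K M s (k0 + K)) > int M) \<and>
            (\<forall>k0\<in>{1..K}. 2 * (Dgap K M s k0 + Dgap K M s (k0 + K)) > int M \<longrightarrow>
               (let O1 = s ` {k0+1..k0+K};
                    O2 = (if k0 = K then s ` {1..K}
                          else (\<lambda>i. s i - int M) ` {k0+K+1..2*K} \<union> s ` {1..k0})
                in Max O1 - Min O1 \<le> 2 * tau \<and> Max O2 - Min O2 \<le> 2 * tau))"
proof -
  define W where "W k = s(k+K) - s(k+1)" for k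
  define W' where "W' k = (if k = K then s K - s 1 else s k + int M - s(k+K+1))" for k
  define P where "P k = Dgap K M s k + Dgap K M s (k+K)" for k
  have sum: "P k + W k + W' k = int M" if "k \<in> {1..K}" for k
    using that K1 by (cases "k = K") (auto simp: P_def W_def W'_def Dgap_def mult_2)
  have un: "P k1 \<le> W k2 + W' k2" if "k1 \<in> {1..K}" "k2 \<in> {1..K}" "k1 < k2" for k1 k2
  proof -
    have P: "P k1 = (s(k1+1) - s k1) + (s(k1+K+1) - s(k1+K))"
      using that by (auto simp: P_def Dgap_def)
    have 1: "s(k1+K+1) \<le> s(k2+K)" "s(k2+1) \<le> s(k1+K)"
      using that by (auto intro!: mono)
    have 2: "s(k1+1) - s k1 \<le> W' k2"
    proof (cases "k2 = K")
      case True
      then show ?thesis using that mono[of "k1+1" K] mono[of 1 k1] K1 by (auto simp: W'_def)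
    next
      case False
      then show ?thesis using that mono[of "k1+1" k2] rng[of k1] rng[of "k2+K+1"]
        by (auto simp: W'_def)
    qed
    show ?thesis using P 1 2 by (simp add: W_def)
  qed
  obtain ks where ks: "ks \<in> {1..K}" "W ks \<le> 2*tau" "W' ks \<le> 2*tau"
    using ex by (auto simp: W_def W'_def)
  have Pks: "2 * P ks > int M" using sum[OF ks(1)] ks tau by linarith
  have only: "k = ks" if "k \<in> {1..K}" "2 * P k > int M" for k
  proof (rule ccontr)
    assume "k \<noteq> ks"
    then consider "k < ks" | "ks < k" by linarith
    then show False
    proof cases
      case 1 then show ?thesis using un[OF that(1) ks(1) 1] sum[OF ks(1)] Pks that by linarith
    next
      case 2 then show ?thesis using un[OF ks(1) that(1) 2] sum[OF that(1)] Pks that by linarith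
    qed
  qed
  have part1: "\<exists>!k0. k0 \<in> {1..K} \<and> 2 * P k0 > int M"
    using ks(1) Pks only by blast
  have O1: "Max (s ` {k+1..k+K}) - Min (s ` {k+1..k+K}) = W k" if "k \<in> {1..K}" for k
  proof -
    have "Max (s ` {k+1..k+K}) = s (k+K)"
      by (rule Max_eqI) (use that K1 in \<open>auto intro!: mono\<close>)
    moreover have "Min (s ` {k+1..k+K}) = s (k+1)"
      by (rule Min_eqI) (use that K1 in \<open>auto intro!: mono\<close>)
    ultimately show ?thesis by (simp add: W_def)
  qed
  have O2: "Max (if k = K then s ` {1..K}
                          else (\<lambda>i. s i - int M) ` {k+K+1..2*K} \<union> s ` {1..k})
          - Min (if k = K then s ` {1..K}
                          else (\<lambda>i. s i - int M) ` {k+K+1..2*K} \<union> s ` {1..k}) = W' k"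
    if "k \<in> {1..K}" for k
  proof (cases "k = K")
    case True
    have "Max (s ` {1..K}) = s K"
      by (rule Max_eqI) (use that K1 in \<open>auto intro!: mono\<close>)
    moreover have "Min (s ` {1..K}) = s 1"
      by (rule Min_eqI) (use that K1 in \<open>auto intro!: mono\<close>)
    ultimately show ?thesis using True by (simp add: W'_def)
  next
    case False
    let ?A = "(\<lambda>i. s i - int M) ` {k+K+1..2*K} \<union> s ` {1..k}"
    have "Max ?A = s k"
    proof (rule Max_eqI)
      fix y assume "y \<in> ?A"
      then show "y \<le> s k"
      proof
        assume "y \<in> (\<lambda>i. s i - int M) ` {k+K+1..2*K}"
        then obtain i where "i \<in> {k+K+1..2*K}" "y = s i - int M" by auto
        then show ?thesis using rng[of i] rng[of k] that by auto
      next
        assume "y \<in> s ` {1..k}"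
        then show ?thesis using that by (auto intro!: mono)
      qed
    qed (use that in auto)
    moreover have "Min ?A = s (k+K+1) - int M"
    proof (rule Min_eqI)
      fix y assume "y \<in> ?A"
      then show "y \<ge> s (k+K+1) - int M"
      proof
        assume "y \<in> (\<lambda>i. s i - int M) ` {k+K+1..2*K}"
        then obtain i where "i \<in> {k+K+1..2*K}" "y = s i - int M" by auto
        then show ?thesis using mono[of "k+K+1" i] by auto
      next
        assume "y \<in> s ` {1..k}"
        then obtain i where "i \<in> {1..k}" "y = s i" by auto
        then show ?thesis using rng[of i] rng[of "k+K+1"] that False by auto
      qed
    qed (use that False in auto)
    ultimately show ?thesis using False by (simp add: W'_def)
  qed
  have part2: "W k \<le> 2*tau \<and> W' k \<le> 2*tau" if "k \<in> {1..K}" "2 * P k > int M" for k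
    using only[OF that] ks by simp
  show ?thesis
    unfolding Let_def using part1 part2 O1 O2 unfolding P_def by auto
qed



lemma cnt_le:
  fixes t :: "'a::linorder list"
  assumes "sorted t" "i < length t" "\<not> P (t!i)" "\<And>x y. x \<le> y \<Longrightarrow> P y \<Longrightarrow> P x"
  shows "length (filter P t) \<le> i"
proof -
  have "filter P (drop i t) = []"
  proof -
    have "\<not> P x" if xin: "x \<in> set (drop i t)" for x
    proof -
      obtain j0 where j0: "j0 < length (drop i t)" "x = drop i t ! j0"
        using xin unfolding in_set_conv_nth by blast
      define j where "j = i + j0"
      have "i \<le> j" "j < length t" "x = t ! j" using j0 by (auto simp: j_def)
      then have "t!i \<le> x" using assms(1,2) by (simp add: sorted_nth_mono)
      then show ?thesis using assms(3,4) by blast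
    qed
    then show ?thesis by (simp add: filter_empty_conv)
  qed
  moreover have "length (filter P (take i t)) \<le> i"
    using length_filter_le[of P "take i t"] assms(2) by simp
  moreover have "length (filter P t) = length (filter P (take i t)) + length (filter P (drop i t))"
    by (metis filter_append length_append append_take_drop_id)
  ultimately show ?thesis by simp
qed

lemma cnt_ge:
  fixes t :: "'a::linorder list"
  assumes "sorted t" "i < length t" "P (t!i)" "\<And>x y. x \<le> y \<Longrightarrow> P y \<Longrightarrow> P x"
  shows "length (filter P t) \<ge> i + 1"
proof -
  have "filter P (take (i+1) t) = take (i+1) t"
  proof -
    have "P x" if xin: "x \<in> set (take (i+1) t)" for x
    proof -
      obtain j where j0: "j < length (take (i+1) t)" "x = take (i+1) t ! j"
        using xin unfolding in_set_conv_nth by blast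
      then have "j < i+1" "x = t ! j" by auto
      then have "x \<le> t!i" using assms(1,2) by (simp add: sorted_nth_mono)
      then show ?thesis using assms(3,4) by blast
    qed
    then show ?thesis by (simp add: filter_id_conv)
  qed
  then have "length (filter P (take (i+1) t)) = i + 1" using assms(2) by simp
  moreover have "length (filter P t) = length (filter P (take (i+1) t)) + length (filter P (drop (i+1) t))"
    by (metis filter_append length_append append_take_drop_id)
  ultimately show ?thesis by simp
qed

lemma lenfilter: "mset S = mset X \<Longrightarrow> length (filter P S) = length (filter P X)"
  by (metis mset_filter size_mset)

lemma core:
  fixes S :: "int list" and K :: nat and M a0 b tau :: int
  assumes srt: "sorted S" and len: "length S = 2*K" and K1: "K \<ge> 1"
    and rng: "\<forall>x\<in>set S. 0 \<le> x \<and> x < M"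
    and a0: "0 \<le> a0" "a0 < M" and ab: "a0 \<le> b" "b + 2*tau < a0 + M"
    and c1: "K \<le> length (filter (\<lambda>x. (if x < a0 then x + M else x) \<le> a0 + 2*tau) S)"
    and c2: "length (filter (\<lambda>x. (if x < a0 then x + M else x) < b) S) \<le> K"
    and c3: "\<forall>x\<in>set S. (if x < a0 then x + M else x) \<le> b + 2*tau"
  shows "\<exists>k\<in>{1..K}. S!(k+K-1) - S!k \<le> 2*tau \<and>
           (if k = K then S!(K-1) - S!0 else S!(k-1) + M - S!(k+K)) \<le> 2*tau"
proof -
  define f where "f x = (if x < a0 then x + M else x)" for x
  define n where "n = length (takeWhile (\<lambda>x. x < a0) S)"
  define t where "t = drop n S @ map (\<lambda>x. x + M) (take n S)"
  have tw: "take n S = takeWhile (\<lambda>x. x<a0) S" by (metis n_def takeWhile_eq_take)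
  have lt: "\<forall>x\<in>set (take n S). x < a0" using tw by (auto dest: set_takeWhileD)
  have nle: "n \<le> 2*K" using len n_def length_takeWhile_le by metis
  have ge: "\<forall>x\<in>set (drop n S). a0 \<le> x"
  proof
    fix x assume "x \<in> set (drop n S)"
    then obtain j where j: "j < length S - n" "x = S ! (n + j)"
      by (auto simp: in_set_conv_nth)
    have "\<not> S ! n < a0" unfolding n_def by (rule nth_length_takeWhile) (use j n_def in simp)
    moreover have "S!n \<le> x" using j srt by (simp add: sorted_nth_mono)
    ultimately show "a0 \<le> x" by simp
  qed
  have mt: "mset t = mset (map f S)"
  proof -
    have "map f S = map f (take n S) @ map f (drop n S)" by (metis append_take_drop_id map_append)
    moreover have "map f (take n S) = map (\<lambda>x. x + M) (take n S)"
      using lt by (auto simp: f_def)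
    moreover have "map f (drop n S) = drop n S"
      by (rule map_idI) (use ge in \<open>auto simp: f_def\<close>)
    ultimately show ?thesis by (simp add: t_def add.commute)
  qed
  have st: "sorted t"
    unfolding t_def sorted_append
  proof (intro conjI ballI)
    show "sorted (drop n S)" using srt by (simp add: sorted_wrt_drop)
    show "sorted (map (\<lambda>x. x + M) (take n S))"
      using srt by (auto simp: sorted_map sorted_wrt_take)
    fix x y assume "x \<in> set (drop n S)" "y \<in> set (map (\<lambda>x. x + M) (take n S))"
    then obtain z where z: "z \<in> set (take n S)" "y = z + M" by auto
    have "x \<in> set S" using \<open>x \<in> set (drop n S)\<close> by (rule in_set_dropD)
    moreover have "z \<in> set S" using z(1) by (rule in_set_takeD)
    ultimately have "x < M" "0 \<le> z" using rng by auto
    then show "x \<le> y" using z(2) by simp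
  qed
  have lt_len: "length t = 2*K" using len nle by (simp add: t_def)
  have setT: "set t = f ` set S" using mt by (metis mset_eq_setD set_map)
  have fge: "a0 \<le> f x" if "x \<in> set S" for x using rng that a0 by (auto simp: f_def)
  have cntt: "length (filter P t) = length (filter (P \<circ> f) S)" for P
    using lenfilter[OF mt] by (simp add: filter_map)
  have t0: "a0 \<le> t!0"
  proof -
    have "t!0 \<in> set t" using lt_len K1 by (intro nth_mem) simp
    then show ?thesis using setT fge by auto
  qed
  have t2K: "t!(2*K-1) \<le> b + 2*tau"
  proof -
    have "t!(2*K-1) \<in> set t" using lt_len K1 by (intro nth_mem) simp
    then have "t!(2*K-1) \<in> f ` set S" using setT by simp
    then show ?thesis using c3 by (auto simp: f_def)
  qed
  have tK1: "t!(K-1) \<le> a0 + 2*tau"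
  proof (rule ccontr)
    assume "\<not> ?thesis"
    then have "length (filter (\<lambda>x. x \<le> a0 + 2*tau) t) \<le> K - 1"
      by (intro cnt_le st) (use lt_len K1 in auto)
    then show False using c1 cntt[of "\<lambda>x. x \<le> a0 + 2*tau"] K1 by (simp add: o_def f_def)
  qed
  have tK: "b \<le> t!K"
  proof (rule ccontr)
    assume "\<not> ?thesis"
    then have "length (filter (\<lambda>x. x < b) t) \<ge> K + 1"
      by (intro cnt_ge st) (use lt_len K1 in auto)
    then show False using c2 cntt[of "\<lambda>x. x < b"] K1 by (simp add: o_def f_def)
  qed
  have w1: "t!(K-1) - t!0 \<le> 2*tau" "t!(2*K-1) - t!K \<le> 2*tau" using t0 t2K tK1 tK ab by auto
  have tnth: "t!j = (if j < 2*K - n then S!(n+j) else S!(j - (2*K-n)) + M)" if "j < 2*K" for j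
  proof -
    have "\<not> j < 2*K - n \<Longrightarrow> j + n - 2*K < n" using that by linarith
    then show ?thesis using that nle len by (simp add: t_def nth_append)
  qed
  consider "n = 0" | "n = 2*K" | "1 \<le> n \<and> n \<le> K" | "K < n \<and> n < 2*K" using nle by linarith
  then show ?thesis
  proof cases
    case 1
    then have tj: "t!j = S!j" if "j < 2*K" for j using tnth[OF that] that by simp
    have "t!(K-1) = S!(K-1)" "t!0 = S!0" "t!K = S!K" "t!(2*K-1) = S!(K+K-1)"
      using tj[of "K-1"] tj[of 0] tj[of K] tj[of "2*K-1"] K1 by (auto simp: mult_2)
    then show ?thesis using w1 K1 by (intro bexI[of _ K]) auto
  next
    case 2
    then have tj: "t!j = S!j + M" if "j < 2*K" for j using tnth[OF that] that by simp
    have "t!(K-1) = S!(K-1) + M" "t!0 = S!0 + M" "t!K = S!K + M" "t!(2*K-1) = S!(K+K-1) + M"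
      using tj[of "K-1"] tj[of 0] tj[of K] tj[of "2*K-1"] K1 by (auto simp: mult_2)
    then show ?thesis using w1 K1 by (intro bexI[of _ K]) auto
  next
    case 3
    have e1: "t!(K-1) = S!(n+K-1)" "t!0 = S!n" using tnth[of "K-1"] tnth[of 0] 3 by auto
    show ?thesis
    proof (rule bexI[of _ n])
      show "n \<in> {1..K}" using 3 by auto
      show "S!(n+K-1) - S!n \<le> 2*tau \<and>
           (if n = K then S!(K-1) - S!0 else S!(n-1) + M - S!(n+K)) \<le> 2*tau"
      proof (cases "n = K")
        case True
        have "t!K = S!0 + M" "t!(2*K-1) = S!(K-1) + M"
          using tnth[of K] tnth[of "2*K-1"] True K1 by auto
        then show ?thesis using w1 e1 True by auto
      next
        case False
        have "t!K = S!(n+K)" "t!(2*K-1) = S!(n-1) + M"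
          using tnth[of K] tnth[of "2*K-1"] False 3 K1 by auto
        then show ?thesis using w1 e1 False by auto
      qed
    qed
  next
    case 4
    have e: "t!K = S!(n-K) + M" "t!(2*K-1) = S!(n-1)+M" "t!(K-1) = S!(n-K-1) + M" "t!0 = S!n"
    proof -
      have i: "\<not> K < 2*K - n" "\<not> 2*K-1 < 2*K-n" "\<not> K-1 < 2*K-n" "0 < 2*K-n"
        "K - (2*K-n) = n - K" "2*K-1-(2*K-n) = n-1" "K-1-(2*K-n) = n-K-1" "K < 2*K" "2*K-1 < 2*K" "K-1 < 2*K"
        using 4 K1 by auto
      show "t!K = S!(n-K) + M" using tnth[of K] i by simp
      show "t!(2*K-1) = S!(n-1)+M" using tnth[of "2*K-1"] i by simp
      show "t!(K-1) = S!(n-K-1) + M" using tnth[of "K-1"] i by simp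
      show "t!0 = S!n" using tnth[of 0] i by simp
    qed
    show ?thesis
    proof (rule bexI[of _ "n-K"])
      show "n - K \<in> {1..K}" using 4 by auto
      have "n - K + K - 1 = n - 1" "n - K - 1 = n - K - 1" "n - K + K = n" using 4 by auto
      then show "S!(n-K+K-1) - S!(n-K) \<le> 2*tau \<and>
           (if n-K = K then S!(K-1) - S!0 else S!(n-K-1) + M - S!(n-K+K)) \<le> 2*tau"
        using w1 e 4 by auto
    qed
  qed
qed



lemma lam:
  fixes v a0 M :: int
  assumes "0 \<le> v" "v < M" "0 \<le> a0" "a0 < M"
  shows "(if v < a0 then v + M else v) = a0 + (v - a0) mod M"
proof (cases "v < a0")
  case True
  have "(v - a0) mod M = (v - a0 + M) mod M" by simp
  also have "\<dots> = v - a0 + M" using True assms by (intro mod_pos_pos_trivial) auto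
  finally show ?thesis using True by simp
next
  case False
  then have "(v - a0) mod M = v - a0" using assms by (intro mod_pos_pos_trivial) auto
  then show ?thesis using False by simp
qed

lemma clus:
  fixes tau M cc dl e a0 v :: int
  assumes "0 \<le> e" "e + 2*tau < M" "\<bar>dl\<bar> \<le> tau" "0 \<le> tau"
    "v = (cc + dl) mod M" "((cc - tau) mod M - a0) mod M = e" "0 \<le> a0" "a0 < M"
  shows "a0 + e \<le> (if v < a0 then v + M else v) \<and> (if v < a0 then v + M else v) \<le> a0 + e + 2*tau"
proof -
  have M0: "0 < M" using assms by linarith
  have v: "0 \<le> v" "v < M" using assms(5) M0 by auto
  define b0 where "b0 = (cc - tau) mod M"
  have "(v - b0) mod M = ((cc + dl) - (cc - tau)) mod M"
    unfolding assms(5) b0_def by (rule mod_diff_eq)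
  also have "\<dots> = (dl + tau) mod M" by simp
  also have "\<dots> = dl + tau" using assms M0 by (intro mod_pos_pos_trivial) auto
  finally have vb: "(v - b0) mod M = dl + tau" .
  have "(v - a0) mod M = ((v - b0) mod M + (b0 - a0) mod M) mod M"
    by (simp add: mod_add_eq)
  also have "\<dots> = (dl + tau + e) mod M" using vb assms(6) b0_def by simp
  also have "\<dots> = dl + tau + e" using assms M0 by (intro mod_pos_pos_trivial) auto
  finally have "(v - a0) mod M = dl + tau + e" .
  then show ?thesis using lam[OF v assms(7,8)] assms by auto
qed

lemma core2:
  fixes S ys zs :: "int list" and K :: nat and M a0 b tau :: int
  assumes srt: "sorted S" and ms: "mset S = mset (ys @ zs)" and ly: "length ys = K" and lz: "length zs = K"
    and K1: "K \<ge> 1"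
    and rng: "\<forall>x\<in>set S. 0 \<le> x \<and> x < M"
    and a0: "0 \<le> a0" "a0 < M" and ab: "a0 \<le> b" "b + 2*tau < a0 + M"
    and cy: "\<forall>v\<in>set ys. a0 \<le> (if v < a0 then v + M else v) \<and> (if v < a0 then v + M else v) \<le> a0 + 2*tau"
    and cz: "\<forall>v\<in>set zs. b \<le> (if v < a0 then v + M else v) \<and> (if v < a0 then v + M else v) \<le> b + 2*tau"
  shows "\<exists>k\<in>{1..K}. S!(k+K-1) - S!k \<le> 2*tau \<and>
           (if k = K then S!(K-1) - S!0 else S!(k-1) + M - S!(k+K)) \<le> 2*tau"
proof (rule core[OF srt _ K1 rng a0 ab])
  show "length S = 2*K" using ms ly lz by (metis length_append mset_eq_length mult_2)
  let ?f = "\<lambda>x. if x < a0 then x + M else x"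
  have "length (filter (\<lambda>x. ?f x \<le> a0 + 2*tau) S) = length (filter (\<lambda>x. ?f x \<le> a0 + 2*tau) (ys @ zs))"
    by (rule lenfilter[OF ms])
  moreover have "filter (\<lambda>x. ?f x \<le> a0 + 2*tau) ys = ys" using cy by (simp add: filter_id_conv)
  ultimately show "K \<le> length (filter (\<lambda>x. ?f x \<le> a0 + 2*tau) S)" using ly by simp
  have "length (filter (\<lambda>x. ?f x < b) S) = length (filter (\<lambda>x. ?f x < b) (ys @ zs))"
    by (rule lenfilter[OF ms])
  moreover have "filter (\<lambda>x. ?f x < b) zs = []" using cz by (force simp: filter_empty_conv)
  moreover have "length (filter (\<lambda>x. ?f x < b) ys) \<le> K" using ly length_filter_le by metis
  ultimately show "length (filter (\<lambda>x. ?f x < b) S) \<le> K" by simp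
  have "set S = set ys \<union> set zs" using ms by (metis mset_eq_setD set_append)
  then show "\<forall>x\<in>set S. ?f x \<le> b + 2*tau" using cy cz ab by fastforce
qed



theorem lemma2:
  fixes K M :: nat and m N :: "nat \<Rightarrow> nat" and dr :: "nat \<Rightarrow> nat \<Rightarrow> int"
  assumes "K \<ge> 2" and "M > 0"
    and "\<forall>k\<in>{1..K}. m k > 0"
    and "\<forall>i\<in>{1..K}. \<forall>j\<in>{1..K}. i < j \<longrightarrow> m i < m j"
    and "\<forall>i\<in>{1..K}. \<forall>j\<in>{1..K}. i \<noteq> j \<longrightarrow> coprime (m i) (m j)"
    and "8 * Max {\<bar>dr l k\<bar> | l k. l \<in> {1,2} \<and> k \<in> {1..K}} < int M"
  shows "let tau = Max {\<bar>dr l k\<bar> | l k. l \<in> {1,2} \<and> k \<in> {1..K}};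
             s = sseq K M m N dr;
             D = Dgap K M s
         in (\<exists>!k0. k0 \<in> {1..K} \<and> 2 * (D k0 + D (k0 + K)) > int M) \<and>
            (\<forall>k0\<in>{1..K}. 2 * (D k0 + D (k0 + K)) > int M \<longrightarrow>
               (let O1 = s ` {k0+1..k0+K};
                    O2 = (if k0 = K then s ` {1..K}
                          else (\<lambda>i. s i - int M) ` {k0+K+1..2*K} \<union> s ` {1..k0})
                in Max O1 - Min O1 \<le> 2 * tau \<and> Max O2 - Min O2 \<le> 2 * tau))"
proof -
  define tau where "tau = Max {\<bar>dr l k\<bar> | l k. l \<in> {1,2} \<and> k \<in> {1..K}}"
  define xs where "xs = [rc M m N dr l k. l \<leftarrow> [1,2], k \<leftarrow> [1..<K+1]]"
  define ys where "ys = map (rc M m N dr 1) [1..<K+1]"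
  define zs where "zs = map (rc M m N dr 2) [1..<K+1]"
  define S where "S = sort xs"
  define s where "s = sseq K M m N dr"
  define c where "c l = int (N l)" for l
  have K1: "K \<ge> 1" using assms(1) by simp
  have Mp: "(0::int) < int M" using assms(2) by simp
  have xs_eq: "xs = ys @ zs" by (simp add: xs_def ys_def zs_def)
  have sS: "s i = S!(i-1)" for i by (simp add: s_def sseq_def S_def xs_def)
  have fin: "finite {\<bar>dr l k\<bar> | l k. l \<in> {1,2} \<and> k \<in> {1..K}}"
  proof -
    have "{\<bar>dr l k\<bar> | l k. l \<in> {1,2} \<and> k \<in> {1..K}} = (\<lambda>(l,k). \<bar>dr l k\<bar>) ` ({1,2} \<times> {1..K})"
      by (auto; blast)
    then show ?thesis by simp
  qed
  have drb: "\<bar>dr l k\<bar> \<le> tau" if "l \<in> {1,2}" "k \<in> {1..K}" for l k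
    unfolding tau_def by (rule Max_ge[OF fin]) (use that in blast)
  have tau0: "0 \<le> tau" using drb[of 1 1] K1 by force
  have t8: "8 * tau < int M" using assms(6) by (simp add: tau_def)
  have rcv: "rc M m N dr l k = (c l + dr l k) mod int M" for l k
  proof -
    have "int (N l mod (M * m k)) mod int M = int (N l) mod int M"
      by (metis dvd_triv_left mod_mod_cancel of_nat_mod)
    then show ?thesis unfolding rc_def c_def by (metis mod_add_left_eq)
  qed
  have setxs: "\<forall>x\<in>set xs. 0 \<le> x \<and> x < int M"
    using Mp by (auto simp: xs_def rc_def)
  have srt: "sorted S" and msS: "mset S = mset (ys @ zs)" and setS: "set S = set xs"
    by (auto simp: S_def xs_eq)
  have rngS: "\<forall>x\<in>set S. 0 \<le> x \<and> x < int M" using setxs setS by simp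
  define a1 where "a1 = (c 1 - tau) mod int M"
  define a2 where "a2 = (c 2 - tau) mod int M"
  define d where "d = (a2 - a1) mod int M"
  have a1r: "0 \<le> a1" "a1 < int M" using Mp by (auto simp: a1_def)
  have a2r: "0 \<le> a2" "a2 < int M" using Mp by (auto simp: a2_def)
  have dr0: "0 \<le> d" "d < int M" using Mp by (auto simp: d_def)
  have ly: "length ys = K" "length zs = K" by (auto simp: ys_def zs_def)
  have ysv: "\<forall>v\<in>set ys. \<exists>k\<in>{1..K}. v = (c 1 + dr 1 k) mod int M" by (auto simp: ys_def rcv)
  have zsv: "\<forall>v\<in>set zs. \<exists>k\<in>{1..K}. v = (c 2 + dr 2 k) mod int M" by (auto simp: zs_def rcv)
  have ex: "\<exists>k\<in>{1..K}. S!(k+K-1) - S!k \<le> 2*tau \<and>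
           (if k = K then S!(K-1) - S!0 else S!(k-1) + int M - S!(k+K)) \<le> 2*tau"
  proof (cases "d + 2*tau < int M")
    case True
    show ?thesis
    proof (rule core2[OF srt msS ly K1 rngS a1r, of "a1 + d"])
      show "a1 \<le> a1 + d" "a1 + d + 2 * tau < a1 + int M" using dr0 True by auto
      show "\<forall>v\<in>set ys. a1 \<le> (if v < a1 then v + int M else v) \<and> (if v < a1 then v + int M else v) \<le> a1 + 2 * tau"
      proof
        fix v assume "v \<in> set ys"
        then obtain k where k: "k \<in> {1..K}" "v = (c 1 + dr 1 k) mod int M" using ysv by blast
        show "a1 \<le> (if v < a1 then v + int M else v) \<and> (if v < a1 then v + int M else v) \<le> a1 + 2 * tau"
        proof -
          have e: "((c 1 - tau) mod int M - a1) mod int M = 0" by (simp add: a1_def)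
          have "(0::int) + 2*tau < int M" using t8 tau0 by simp
          from clus[OF _ this drb[of 1 k] tau0 k(2) e a1r] k(1) show ?thesis by simp
        qed
      qed
      show "\<forall>v\<in>set zs. a1 + d \<le> (if v < a1 then v + int M else v) \<and> (if v < a1 then v + int M else v) \<le> a1 + d + 2 * tau"
      proof
        fix v assume "v \<in> set zs"
        then obtain k where k: "k \<in> {1..K}" "v = (c 2 + dr 2 k) mod int M" using zsv by blast
        show "a1 + d \<le> (if v < a1 then v + int M else v) \<and> (if v < a1 then v + int M else v) \<le> a1 + d + 2 * tau"
        proof -
          have e: "((c 2 - tau) mod int M - a1) mod int M = d" by (simp add: a2_def d_def)
          from clus[OF dr0(1) True drb[of 2 k] tau0 k(2) e a1r] k(1) show ?thesis by simp
        qed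
      qed
    qed
  next
    case False
    define d' where "d' = (a1 - a2) mod int M"
    have dnz: "d mod int M \<noteq> 0" using False t8 tau0 dr0 by simp
    have "d' = (- (a2 - a1)) mod int M" by (simp add: d'_def)
    also have "\<dots> = int M - d" using dnz unfolding zmod_zminus1_eq_if d_def by simp
    finally have d'v: "d' = int M - d" .
    have msS': "mset S = mset (zs @ ys)" using msS by (simp add: add.commute)
    show ?thesis
    proof (rule core2[OF srt msS' ly(2) ly(1) K1 rngS a2r, of "a2 + d'"])
      show "a2 \<le> a2 + d'" "a2 + d' + 2 * tau < a2 + int M" using d'v dr0 False t8 tau0 by auto
      show "\<forall>v\<in>set zs. a2 \<le> (if v < a2 then v + int M else v) \<and> (if v < a2 then v + int M else v) \<le> a2 + 2 * tau"
      proof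
        fix v assume "v \<in> set zs"
        then obtain k where k: "k \<in> {1..K}" "v = (c 2 + dr 2 k) mod int M" using zsv by blast
        show "a2 \<le> (if v < a2 then v + int M else v) \<and> (if v < a2 then v + int M else v) \<le> a2 + 2 * tau"
        proof -
          have e: "((c 2 - tau) mod int M - a2) mod int M = 0" by (simp add: a2_def)
          have "(0::int) + 2*tau < int M" using t8 tau0 by simp
          from clus[OF _ this drb[of 2 k] tau0 k(2) e a2r] k(1) show ?thesis by simp
        qed
      qed
      show "\<forall>v\<in>set ys. a2 + d' \<le> (if v < a2 then v + int M else v) \<and> (if v < a2 then v + int M else v) \<le> a2 + d' + 2 * tau"
      proof
        fix v assume "v \<in> set ys"
        then obtain k where k: "k \<in> {1..K}" "v = (c 1 + dr 1 k) mod int M" using ysv by blast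
        have "d' + 2*tau < int M" using d'v False t8 tau0 by auto
        show "a2 + d' \<le> (if v < a2 then v + int M else v) \<and> (if v < a2 then v + int M else v) \<le> a2 + d' + 2 * tau"
        proof -
          have e: "((c 1 - tau) mod int M - a2) mod int M = d'" by (simp add: a1_def d'_def)
          have d0: "0 \<le> d'" using Mp by (simp add: d'_def)
          from clus[OF d0 \<open>d' + 2*tau < int M\<close> drb[of 1 k] tau0 k(2) e a2r] k(1) show ?thesis by simp
        qed
      qed
    qed
  qed
  have ex2: "\<exists>k\<in>{1..K}. s(k+K) - s(k+1) \<le> 2*tau \<and>
               (if k = K then s K - s 1 else s k + int M - s(k+K+1)) \<le> 2*tau"
  proof -
    obtain k where k: "k \<in> {1..K}" "S!(k+K-1) - S!k \<le> 2*tau"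
      "(if k = K then S!(K-1) - S!0 else S!(k-1) + int M - S!(k+K)) \<le> 2*tau"
      using ex by blast
    have "s(k+K) = S!(k+K-1)" "s(k+1) = S!k" "s K = S!(K-1)" "s 1 = S!0" "s k = S!(k-1)"
      "s(k+K+1) = S!(k+K)" by (simp_all add: sS)
    then show ?thesis using k by (intro bexI[of _ k]) auto
  qed
  have lenS: "length S = 2*K" using msS ly by (metis length_append mset_eq_length mult_2)
  have mono: "s i \<le> s j" if "1 \<le> i" "i \<le> j" "j \<le> 2*K" for i j
    unfolding sS using that lenS srt by (intro sorted_nth_mono) auto
  have rng: "0 \<le> s i \<and> s i < int M" if "1 \<le> i" "i \<le> 2*K" for i
  proof -
    have "S!(i-1) \<in> set S" using that lenS by (intro nth_mem) auto
    then show ?thesis using rngS sS by auto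
  qed
  note F = final[OF K1 mono rng t8 ex2]
  show ?thesis using F unfolding Let_def tau_def s_def .
qed


end
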